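(* Let $G=(V,E)$ be a graph, let $K$ be a positive integer, and let $P$ be the output of the port-based randomized greedy procedure (Algorithm 2) described in the context, run on $G$ with parameter $K$. Then $$\tfrac12\rho(G)\le\mathbb{E}|P|\le\left(1+\tfrac{2}{K}\right)\rho(G),$$ where the expectation is over the random permutation used by the procedure.
   Context: $\rho(G)$ is the maximum number of edges in a path cover of $G$ (a collection of vertex-disjoint simple paths). Procedure (Algorithm 2): each vertex $w$ has two ports $w^0,w^1$. Build a graph $H$ whose vertices are, for every edge $(u,v)\in E$, $K+2$ vertices: one corresponding to $(u,v)$ occupying $u^0$ and $v^1$, one corresponding to $(u,v)$ occupying $u^1$ and $v^0$, and $K$ each corresponding to $(u,v)$ occupying $u^0$ and $v^0$. Two distinct vertices $a,b$ of $H$, corresponding to edges $e_a,e_b$ of $G$, are adjacent in $H$ if $e_a=e_b$, or if $e_a$ and $e_b$ share exactly one endpoint $w$ and $a,b$ occupy the same port of $w$. Pick a uniformly random permutation of the vertices of $H$ and compute the randomized greedy maximal independent set $I$: scan the vertices in this order and add a vertex to $I$ if none of its neighbors is already in $I$. The output $P$ is the set of edges of $G$ corresponding to vertices of $I$. *)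

theory Defs
  imports "HOL-Probability.Probability" "HOL-Combinatorics.Multiset_Permutations"
begin

definition simple_graph :: "'a set \<Rightarrow> 'a set set \<Rightarrow> bool" where
  "simple_graph V E \<longleftrightarrow> finite V \<and> (\<forall>e\<in>E. e \<subseteq> V \<and> card e = 2)"

definition is_path :: "'a set set \<Rightarrow> 'a list \<Rightarrow> bool" where
  "is_path E p \<longleftrightarrow> p \<noteq> [] \<and> distinct p \<and> (\<forall>i. Suc i < length p \<longrightarrow> {p ! i, p ! Suc i} \<in> E)"

definition path_cover :: "'a set \<Rightarrow> 'a set set \<Rightarrow> 'a list set \<Rightarrow> bool" where
  "path_cover V E Ps \<longleftrightarrow> finite Ps \<and> (\<forall>p\<in>Ps. is_path E p \<and> set p \<subseteq> V)
     \<and> (\<forall>p\<in>Ps. \<forall>q\<in>Ps. p \<noteq> q \<longrightarrow> set p \<inter> set q = {})"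

definition pc_edges :: "'a list set \<Rightarrow> nat" where
  "pc_edges Ps = (\<Sum>p\<in>Ps. length p - 1)"

definition rho :: "'a set \<Rightarrow> 'a set set \<Rightarrow> nat" where
  "rho V E = Max {pc_edges Ps | Ps. path_cover V E Ps}"

(* Vertices of H: triples (e, f, i) where e is an edge of G, f assigns a port
   (0 or 1) to each endpoint of e (and 0 outside e), and i is a copy index. *)
type_synonym 'a hvert = "'a set \<times> ('a \<Rightarrow> nat) \<times> nat"

definition H_vertices :: "'a set set \<Rightarrow> nat \<Rightarrow> 'a hvert set" where
  "H_vertices E K = {(e, f, i). e \<in> E \<and> (\<forall>x. x \<notin> e \<longrightarrow> f x = 0) \<and> (\<forall>x\<in>e. f x \<in> {0, 1}) \<and>
      (((\<exists>u\<in>e. \<exists>v\<in>e. u \<noteq> v \<and> f u = 0 \<and> f v = 1) \<and> i = 0) \<or>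
       ((\<forall>x\<in>e. f x = 0) \<and> i < K))}"

definition H_adj :: "'a hvert \<Rightarrow> 'a hvert \<Rightarrow> bool" where
  "H_adj a b \<longleftrightarrow> a \<noteq> b \<and>
     (fst a = fst b \<or>
      (\<exists>w. fst a \<inter> fst b = {w} \<and> fst (snd a) w = fst (snd b) w))"

definition greedy_mis :: "('b \<Rightarrow> 'b \<Rightarrow> bool) \<Rightarrow> 'b list \<Rightarrow> 'b set" where
  "greedy_mis adj xs = foldl (\<lambda>I x. if (\<forall>y\<in>I. \<not> adj x y) then insert x I else I) {} xs"

definition alg2_output :: "'a hvert list \<Rightarrow> 'a set set" where
  "alg2_output xs = fst ` greedy_mis H_adj xs"

definition alg2_expected :: "'a set set \<Rightarrow> nat \<Rightarrow> real" where
  "alg2_expected E K = measure_pmf.expectation (pmf_of_set (permutations_of_set (H_vertices E K)))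
      (\<lambda>xs. real (card (alg2_output xs)))"

end

theory Submission
  imports Defs
begin


lemma greedy_snoc:
  "greedy_mis adj (xs @ [x]) = (if (\<forall>y\<in>greedy_mis adj xs. \<not> adj x y) then insert x (greedy_mis adj xs) else greedy_mis adj xs)"
  by (simp add: greedy_mis_def)

lemma greedy_Nil[simp]: "greedy_mis adj [] = {}"
  by (simp add: greedy_mis_def)

lemma greedy_subset_set: "greedy_mis adj xs \<subseteq> set xs"
  by (induction xs rule: rev_induct) (auto simp: greedy_snoc)

lemma greedy_append_mono: "greedy_mis adj xs \<subseteq> greedy_mis adj (xs @ ys)"
proof (induction ys rule: rev_induct)
  case (snoc y ys) then show ?case
    using greedy_snoc[of adj "xs @ ys" y] by (auto simp del: append_assoc simp: append_assoc[symmetric])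
qed simp

lemma greedy_append_sub: "greedy_mis adj (xs @ ys) \<subseteq> greedy_mis adj xs \<union> set ys"
proof (induction ys rule: rev_induct)
  case (snoc y ys) then show ?case
    using greedy_snoc[of adj "xs @ ys" y] by (auto simp del: append_assoc simp: append_assoc[symmetric])
qed simp

lemma greedy_take:
  assumes "distinct xs"
  shows "greedy_mis adj (take t xs) = greedy_mis adj xs \<inter> set (take t xs)"
proof -
  have xs: "xs = take t xs @ drop t xs" by simp
  have d: "set (take t xs) \<inter> set (drop t xs) = {}"
    using assms by (metis distinct_append xs)
  have "greedy_mis adj xs \<subseteq> greedy_mis adj (take t xs) \<union> set (drop t xs)"
    using greedy_append_sub[of adj "take t xs" "drop t xs"] by simp
  moreover have "greedy_mis adj (take t xs) \<subseteq> greedy_mis adj xs"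
    using greedy_append_mono[of adj "take t xs" "drop t xs"] by simp
  ultimately show ?thesis using d greedy_subset_set[of adj "take t xs"] by blast
qed

lemma greedy_indep:
  assumes sym: "\<And>a b. adj a b \<Longrightarrow> adj b a" and irr: "\<And>a. \<not> adj a a"
  shows "x \<in> greedy_mis adj xs \<Longrightarrow> y \<in> greedy_mis adj xs \<Longrightarrow> \<not> adj x y"
proof (induction xs arbitrary: x y rule: rev_induct)
  case Nil then show ?case by simp
next
  case (snoc z zs)
  show ?case
  proof (cases "\<forall>y\<in>greedy_mis adj zs. \<not> adj z y")
    case True
    then have G: "greedy_mis adj (zs @ [z]) = insert z (greedy_mis adj zs)" by (simp add: greedy_snoc)
    show ?thesis
    proof (cases "x = z")
      case True
      then show ?thesis using snoc(2,3) G \<open>\<forall>y\<in>greedy_mis adj zs. \<not> adj z y\<close> irr[of x]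
        by (metis insert_iff)
    next
      case False
      then show ?thesis using snoc(2,3) G \<open>\<forall>y\<in>greedy_mis adj zs. \<not> adj z y\<close> snoc.IH[of x y] sym[of x z]
        by (metis insert_iff)
    qed
  next
    case False
    then have G: "greedy_mis adj (zs @ [z]) = greedy_mis adj zs" by (auto simp add: greedy_snoc)
    show ?thesis using snoc.IH snoc(2,3) unfolding G by blast
  qed
qed

lemma greedy_maximal:
  "x \<in> set xs \<Longrightarrow> x \<notin> greedy_mis adj xs \<Longrightarrow> \<exists>y\<in>greedy_mis adj xs. adj x y"
proof (induction xs rule: rev_induct)
  case Nil then show ?case by simp
next
  case (snoc z zs)
  show ?case
  proof (cases "x = z")
    case True
    with snoc show ?thesis by (auto simp: greedy_snoc split: if_splits)
  next
    case False
    with snoc have "x \<in> set zs" "x \<notin> greedy_mis adj zs"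
      by (auto simp: greedy_snoc split: if_splits)
    with snoc show ?thesis using greedy_append_mono[of adj zs "[z]"] by blast
  qed
qed

lemma greedy_nth_iff:
  assumes "distinct xs" "t < length xs"
  shows "xs ! t \<in> greedy_mis adj xs \<longleftrightarrow> (\<forall>y\<in>greedy_mis adj (take t xs). \<not> adj (xs ! t) y)"
proof -
  have e: "take (Suc t) xs = take t xs @ [xs ! t]" using assms(2) by (simp add: take_Suc_conv_app_nth)
  have "xs ! t \<in> set (take (Suc t) xs)" using assms(2) by (simp add: e)
  then have "xs ! t \<in> greedy_mis adj xs \<longleftrightarrow> xs ! t \<in> greedy_mis adj (take (Suc t) xs)"
    using greedy_take[OF assms(1), of adj "Suc t"] by blast
  also have "\<dots> \<longleftrightarrow> (\<forall>y\<in>greedy_mis adj (take t xs). \<not> adj (xs ! t) y)"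
  proof -
    have "distinct (take (Suc t) xs)" using assms(1) by simp
    then have "xs ! t \<notin> set (take t xs)" by (simp add: e)
    then have "xs ! t \<notin> greedy_mis adj (take t xs)" using greedy_subset_set[of adj "take t xs"] by blast
    then show ?thesis by (simp add: e greedy_snoc)
  qed
  finally show ?thesis .
qed


abbreviation pt :: "'a hvert \<Rightarrow> 'a \<Rightarrow> nat" where "pt y \<equiv> fst (snd y)"

lemma H_adj_sym: "H_adj a b \<Longrightarrow> H_adj b a"
  unfolding H_adj_def by (auto simp: Int_commute)

lemma H_adj_irr: "\<not> H_adj a a"
  unfolding H_adj_def by auto

lemma card2_edge: "simple_graph V E \<Longrightarrow> e \<in> E \<Longrightarrow> \<exists>u v. u \<noteq> v \<and> e = {u, v}"
  unfolding simple_graph_def by (meson card_2_iff)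

lemma edge_inter:
  assumes "simple_graph V E" "e \<in> E" "e' \<in> E" "e \<noteq> e'" "w \<in> e" "w \<in> e'"
  shows "e \<inter> e' = {w}"
proof -
  obtain u v where e: "u \<noteq> v" "e = {u,v}" using card2_edge[OF assms(1,2)] by blast
  obtain u' v' where e': "u' \<noteq> v'" "e' = {u',v'}" using card2_edge[OF assms(1,3)] by blast
  show ?thesis using e e' assms(4-6) by auto
qed

lemma H_fin: "simple_graph V E \<Longrightarrow> finite (H_vertices E K)"
proof -
  assume sg: "simple_graph V E"
  have fE: "finite E" using sg unfolding simple_graph_def
    by (meson Pow_iff finite_Pow_iff rev_finite_subset subsetI)
  have fV: "finite V" using sg unfolding simple_graph_def by blast
  let ?F = "{f :: 'a \<Rightarrow> nat. (\<forall>x. x \<notin> V \<longrightarrow> f x = 0) \<and> (\<forall>x. f x \<le> 1)}"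
  have "?F \<subseteq> {f. \<forall>x. x \<notin> V \<longrightarrow> f x = 0} \<inter> {f. \<forall>x. f x \<in> {0..1}}" by auto
  have fF: "finite ?F"
  proof -
    have "?F \<subseteq> {f. \<forall>x. (x \<in> V \<longrightarrow> f x \<in> {0..1::nat}) \<and> (x \<notin> V \<longrightarrow> f x = 0)}" by auto
    moreover have "finite {f. \<forall>x. (x \<in> V \<longrightarrow> f x \<in> {0..1::nat}) \<and> (x \<notin> V \<longrightarrow> f x = 0)}"
      using finite_set_of_finite_funs[OF fV, of "{0..1::nat}" 0] by simp
    ultimately show ?thesis by (rule finite_subset)
  qed
  have "H_vertices E K \<subseteq> E \<times> ?F \<times> {..max K 1}"
  proof
    fix h assume "h \<in> H_vertices E K"
    then obtain e f i where h: "h = (e,f,i)" "e \<in> E" "\<forall>x. x \<notin> e \<longrightarrow> f x = 0" "\<forall>x\<in>e. f x \<in> {0,1}"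
      "((\<exists>u\<in>e. \<exists>v\<in>e. u \<noteq> v \<and> f u = 0 \<and> f v = 1) \<and> i = 0) \<or> ((\<forall>x\<in>e. f x = 0) \<and> i < K)"
      unfolding H_vertices_def by blast
    have "e \<subseteq> V" using sg h(2) unfolding simple_graph_def by blast
    then have "\<forall>x. x \<notin> V \<longrightarrow> f x = 0" using h(3) by blast
    moreover have "\<forall>x. f x \<le> 1"
    proof
      fix x show "f x \<le> 1" using h(3,4) by (cases "x \<in> e") auto
    qed
    ultimately have "f \<in> ?F" by blast
    moreover have "i \<le> max K 1" using h(5) by auto
    ultimately show "h \<in> E \<times> ?F \<times> {..max K 1}" using h by auto
  qed
  then show ?thesis using fE fF by (meson finite_SigmaI finite_atMost finite_subset)
qed

lemma H_mem:
  assumes "y \<in> H_vertices E K"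
  shows "fst y \<in> E" "\<And>w. w \<in> fst y \<Longrightarrow> pt y w \<le> 1" "\<And>w. w \<notin> fst y \<Longrightarrow> pt y w = 0"
proof -
  obtain e f i where y: "y = (e,f,i)" by (cases y) auto
  show "fst y \<in> E" using assms y unfolding H_vertices_def by auto
  show "\<And>w. w \<in> fst y \<Longrightarrow> pt y w \<le> 1"
  proof -
    fix w assume "w \<in> fst y"
    then have "f w \<in> {0,1}" using assms y unfolding H_vertices_def by auto
    then show "pt y w \<le> 1" using y by auto
  qed
  show "\<And>w. w \<notin> fst y \<Longrightarrow> pt y w = 0" using assms y unfolding H_vertices_def by auto
qed

lemma H_no11:
  assumes "simple_graph V E" "y \<in> H_vertices E K" "u \<in> fst y" "v \<in> fst y" "u \<noteq> v" "pt y u = 1"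
  shows "pt y v = 0"
proof -
  obtain e f i where y: "y = (e,f,i)" by (cases y) auto
  have "e \<in> E" using assms(2) y unfolding H_vertices_def by auto
  then obtain a b where ab: "a \<noteq> b" "e = {a,b}" using card2_edge[OF assms(1)] by blast
  from assms(2) y have
    "((\<exists>u\<in>e. \<exists>v\<in>e. u \<noteq> v \<and> f u = 0 \<and> f v = 1) \<and> i = 0) \<or> ((\<forall>x\<in>e. f x = 0) \<and> i < K)"
    unfolding H_vertices_def by auto
  then show ?thesis using assms(3-6) y ab by auto
qed

lemma H_port_distinct:
  assumes "simple_graph V E" "y1 \<in> H_vertices E K" "y2 \<in> H_vertices E K" "y1 \<noteq> y2"
    "\<not> H_adj y1 y2" "w \<in> fst y1" "w \<in> fst y2"
  shows "pt y1 w \<noteq> pt y2 w" "fst y1 \<noteq> fst y2"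
proof -
  show ne: "fst y1 \<noteq> fst y2" using assms(4,5) unfolding H_adj_def by auto
  have "fst y1 \<inter> fst y2 = {w}"
    using edge_inter[OF assms(1) H_mem(1)[OF assms(2)] H_mem(1)[OF assms(3)] ne assms(6,7)] .
  then show "pt y1 w \<noteq> pt y2 w" using assms(4,5) unfolding H_adj_def by auto
qed

definition mx :: "'a set \<Rightarrow> 'a \<Rightarrow> 'a hvert" where
  "mx e b = (e, \<lambda>z. if z = b then 1 else 0, 0)"

definition zc :: "'a set \<Rightarrow> nat \<Rightarrow> 'a hvert" where
  "zc e i = (e, \<lambda>_. 0, i)"

lemma mx_in_H:
  assumes "simple_graph V E" "e \<in> E" "b \<in> e"
  shows "mx e b \<in> H_vertices E K"
proof -
  obtain u v where uv: "u \<noteq> v" "e = {u,v}" using card2_edge[OF assms(1,2)] by blast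
  obtain a where a: "a \<in> e" "a \<noteq> b" using uv assms(3) by auto
  have ex: "\<exists>u\<in>e. \<exists>v\<in>e. u \<noteq> v \<and> (if u = b then 1 else 0) = (0::nat) \<and> (if v = b then 1 else 0) = (1::nat)"
    using a assms(3) by auto
  have "\<forall>x. x \<notin> e \<longrightarrow> (if x = b then 1 else 0) = (0::nat)" using assms(3) by auto
  moreover have "\<forall>x\<in>e. (if x = b then 1 else 0) \<in> {0, 1::nat}" by auto
  ultimately show ?thesis unfolding H_vertices_def mx_def using assms(2) ex by blast
qed

lemma zc_in_H:
  assumes "e \<in> E" "i < K"
  shows "zc e i \<in> H_vertices E K"
  unfolding H_vertices_def zc_def using assms by auto


definition pedge :: "'a list \<Rightarrow> nat \<Rightarrow> 'a set" where
  "pedge p i = {p ! i, p ! Suc i}"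

definition Pairs :: "'a list set \<Rightarrow> ('a list \<times> nat) set" where
  "Pairs Ps = Sigma Ps (\<lambda>p. {..<length p - 1})"

definition Cedges :: "'a list set \<Rightarrow> 'a set set" where
  "Cedges Ps = (\<lambda>(p,i). pedge p i) ` Pairs Ps"

lemma card_Pairs: "finite Ps \<Longrightarrow> card (Pairs Ps) = pc_edges Ps"
  unfolding Pairs_def pc_edges_def by (simp add: card_SigmaI)

lemma pc_unique:
  assumes "path_cover V E Ps" "p \<in> Ps" "q \<in> Ps" "w \<in> set p" "w \<in> set q"
  shows "p = q"
  using assms unfolding path_cover_def by blast

lemma inj_pedge:
  assumes pc: "path_cover V E Ps"
  shows "inj_on (\<lambda>(p,i). pedge p i) (Pairs Ps)"
proof (rule inj_onI, clarify)
  fix p i q j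
  assume a: "(p,i) \<in> Pairs Ps" "(q,j) \<in> Pairs Ps" "pedge p i = pedge q j"
  have p: "p \<in> Ps" "Suc i < length p" and q: "q \<in> Ps" "Suc j < length q"
    using a(1,2) unfolding Pairs_def by auto
  have dp: "distinct p" using pc p(1) unfolding path_cover_def is_path_def by auto
  have "p ! i \<in> {q ! j, q ! Suc j}" using a(3) unfolding pedge_def by auto
  moreover have "q ! j \<in> set q" "q ! Suc j \<in> set q" using q(2) by auto
  ultimately have "p ! i \<in> set q" by auto
  then have pq: "p = q" using pc_unique[OF pc p(1) q(1)] p(2) by (meson Suc_lessD nth_mem)
  have "(p!i = p!j \<and> p!Suc i = p!Suc j) \<or> (p!i = p!Suc j \<and> p!Suc i = p!j)"
    using a(3) unfolding pedge_def pq by (simp add: doubleton_eq_iff)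
  then show "p = q \<and> i = j"
    using dp p(2) q(2) pq by (auto simp: nth_eq_iff_index_eq)
qed

lemma card_Cedges:
  assumes pc: "path_cover V E Ps"
  shows "card (Cedges Ps) = pc_edges Ps"
proof -
  have "finite Ps" using pc unfolding path_cover_def by auto
  then show ?thesis unfolding Cedges_def using card_image[OF inj_pedge[OF pc]] card_Pairs by auto
qed

lemma Cedges_sub:
  assumes pc: "path_cover V E Ps"
  shows "Cedges Ps \<subseteq> E"
  using pc unfolding Cedges_def Pairs_def path_cover_def is_path_def pedge_def by auto

lemma finite_Cedges: "path_cover V E Ps \<Longrightarrow> finite (Cedges Ps)"
  unfolding Cedges_def Pairs_def path_cover_def by auto

lemma Cedges_deg:
  assumes pc: "path_cover V E Ps"
  shows "card {c \<in> Cedges Ps. w \<in> c} \<le> 2"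
proof (cases "\<exists>p\<in>Ps. w \<in> set p")
  case False
  have E: "{c \<in> Cedges Ps. w \<in> c} = {}"
    using False unfolding Cedges_def Pairs_def pedge_def by (auto dest: nth_mem)
  show ?thesis unfolding E by simp
next
  case True
  then obtain p where p: "p \<in> Ps" "w \<in> set p" by blast
  then obtain k where k: "k < length p" "p ! k = w" by (meson in_set_conv_nth)
  have dp: "distinct p" using pc p(1) unfolding path_cover_def is_path_def by auto
  have "{c \<in> Cedges Ps. w \<in> c} \<subseteq> {pedge p (k - 1), pedge p k}"
  proof
    fix c assume "c \<in> {c \<in> Cedges Ps. w \<in> c}"
    then obtain q i where c: "c = pedge q i" "q \<in> Ps" "Suc i < length q" "w \<in> c"
      unfolding Cedges_def Pairs_def by auto
    have "w \<in> set q" using c unfolding pedge_def by (auto dest: Suc_lessD)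
    then have qp: "q = p" using pc_unique[OF pc c(2) p(1)] p(2) by blast
    have "p ! i = p ! k \<or> p ! Suc i = p ! k" using c k unfolding pedge_def qp by auto
    then have "i = k \<or> Suc i = k" using dp k c(3) qp by (auto simp: nth_eq_iff_index_eq)
    then show "c \<in> {pedge p (k - 1), pedge p k}" using c(1) qp by auto
  qed
  then have "card {c \<in> Cedges Ps. w \<in> c} \<le> card {pedge p (k - 1), pedge p k}"
    by (rule card_mono[rotated]) simp
  also have "\<dots> \<le> 2" by (simp add: card_insert_if)
  finally show ?thesis .
qed

lemma pc_edges_le_card:
  assumes pc: "path_cover V E Ps" and fV: "finite V"
  shows "pc_edges Ps \<le> card V"
proof -
  have fP: "finite Ps" using pc unfolding path_cover_def by auto
  have "pc_edges Ps \<le> (\<Sum>p\<in>Ps. card (set p))"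
    unfolding pc_edges_def
  proof (rule sum_mono)
    fix p assume "p \<in> Ps"
    then have "distinct p" using pc unfolding path_cover_def is_path_def by auto
    then show "length p - 1 \<le> card (set p)" by (simp add: distinct_card)
  qed
  also have "\<dots> = card (\<Union>p\<in>Ps. set p)"
    by (rule card_UN_disjoint[symmetric]) (use fP pc in \<open>auto simp: path_cover_def\<close>)
  also have "\<dots> \<le> card V"
    by (rule card_mono[OF fV]) (use pc in \<open>auto simp: path_cover_def\<close>)
  finally show ?thesis .
qed

lemma rho_props:
  assumes "simple_graph V E"
  shows "\<And>Ps. path_cover V E Ps \<Longrightarrow> pc_edges Ps \<le> rho V E"
    and "\<exists>Ps. path_cover V E Ps \<and> pc_edges Ps = rho V E"
proof -
  have fV: "finite V" using assms unfolding simple_graph_def by auto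
  let ?S = "{pc_edges Ps | Ps. path_cover V E Ps}"
  have fin: "finite ?S"
    by (rule finite_subset[of _ "{..card V}"]) (use pc_edges_le_card fV in auto)
  have "path_cover V E {}" unfolding path_cover_def by auto
  then have ne: "?S \<noteq> {}" by blast
  show "\<And>Ps. path_cover V E Ps \<Longrightarrow> pc_edges Ps \<le> rho V E"
    unfolding rho_def using fin by (intro Max_ge) auto
  show "\<exists>Ps. path_cover V E Ps \<and> pc_edges Ps = rho V E"
    using Max_in[OF fin ne] unfolding rho_def by auto
qed


lemma double_count:
  assumes "finite A" "finite B"
  shows "(\<Sum>a\<in>A. card {b\<in>B. R a b}) = (\<Sum>b\<in>B. card {a\<in>A. R a b})"
proof -
  have 1: "\<And>a. card {b\<in>B. R a b} = (\<Sum>b\<in>B. if R a b then 1 else 0)"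
    using assms(2) by (simp add: sum.If_cases Int_def)
  have 2: "\<And>b. card {a\<in>A. R a b} = (\<Sum>a\<in>A. if R a b then 1 else 0)"
    using assms(1) by (simp add: sum.If_cases Int_def)
  show ?thesis unfolding 1 2 by (rule sum.swap)
qed

context
  fixes V :: "'a set" and E K \<sigma>
  assumes sg: "simple_graph V E" and Kpos: "K > 0"
    and sig: "\<sigma> \<in> permutations_of_set (H_vertices E K)"
begin

abbreviation "I \<equiv> greedy_mis H_adj \<sigma>"
abbreviation "HH \<equiv> H_vertices E K"

lemma setsig: "set \<sigma> = HH" and dsig: "distinct \<sigma>"
  using sig unfolding permutations_of_set_def by auto

lemma I_sub: "I \<subseteq> HH"
  using greedy_subset_set[of H_adj \<sigma>] setsig by auto

lemma I_fin: "finite I"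
  using I_sub H_fin[OF sg] finite_subset by blast

lemma I_indep: "x \<in> I \<Longrightarrow> y \<in> I \<Longrightarrow> \<not> H_adj x y"
  using greedy_indep[of H_adj, OF H_adj_sym H_adj_irr] by blast

lemma I_max: "h \<in> HH \<Longrightarrow> h \<notin> I \<Longrightarrow> \<exists>y\<in>I. H_adj h y"
  using greedy_maximal[of h \<sigma> H_adj] setsig by blast

lemma I_port: "y1 \<in> I \<Longrightarrow> y2 \<in> I \<Longrightarrow> y1 \<noteq> y2 \<Longrightarrow> w \<in> fst y1 \<Longrightarrow> w \<in> fst y2 \<Longrightarrow> pt y1 w \<noteq> pt y2 w"
proof -
  assume a: "y1 \<in> I" "y2 \<in> I" "y1 \<noteq> y2" "w \<in> fst y1" "w \<in> fst y2"
  have h: "y1 \<in> HH" "y2 \<in> HH" using a I_sub by auto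
  show ?thesis by (rule H_port_distinct(1)[OF sg h a(3) I_indep[OF a(1,2)] a(4,5)])
qed

lemma I_inj: "inj_on fst I"
proof (rule inj_onI)
  fix x y assume "x \<in> I" "y \<in> I" "fst x = fst y"
  then show "x = y" using I_indep[of x y] unfolding H_adj_def by auto
qed

lemma I_card2: "y \<in> I \<Longrightarrow> card (fst y) = 2"
proof -
  assume "y \<in> I"
  then have "fst y \<in> E" using I_sub H_mem(1) by blast
  then show ?thesis using sg unfolding simple_graph_def by blast
qed

lemma lower_det:
  assumes pc: "path_cover V E Ps"
  shows "pc_edges Ps \<le> 2 * card I"
proof -
  define C where "C = Cedges Ps"
  define P where "P = fst ` I"
  define Inc where "Inc = Sigma I fst"
  have fC: "finite C" unfolding C_def using finite_Cedges[OF pc] .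
  have fI: "finite I" by (rule I_fin)
  have fInc: "finite Inc" unfolding Inc_def using fI I_card2
    by (intro finite_SigmaI) (auto intro: card_ge_0_finite)
  have CE: "C \<subseteq> E" unfolding C_def using Cedges_sub[OF pc] .
  have a: "2 \<le> card {iw\<in>Inc. snd iw \<in> c}" if c: "c \<in> C - P" for c
  proof -
    have cE: "c \<in> E" using c CE by auto
    obtain a b where ab: "a \<noteq> b" "c = {a,b}" using card2_edge[OF sg cE] by blast
    have x1: "mx c b \<in> HH" using mx_in_H[OF sg cE] ab by auto
    have x2: "mx c a \<in> HH" using mx_in_H[OF sg cE] ab by auto
    have n1: "mx c b \<notin> I" using c unfolding P_def mx_def by force
    have n2: "mx c a \<notin> I" using c unfolding P_def mx_def by force
    obtain y1 where y1: "y1 \<in> I" "H_adj (mx c b) y1" using I_max[OF x1 n1] by blast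
    obtain y2 where y2: "y2 \<in> I" "H_adj (mx c a) y2" using I_max[OF x2 n2] by blast
    have f1: "fst y1 \<noteq> c" using y1(1) c unfolding P_def by force
    have f2: "fst y2 \<noteq> c" using y2(1) c unfolding P_def by force
    obtain w1 where w1: "c \<inter> fst y1 = {w1}" "pt (mx c b) w1 = pt y1 w1"
      using y1(2) f1 unfolding H_adj_def by (auto simp: mx_def)
    obtain w2 where w2: "c \<inter> fst y2 = {w2}" "pt (mx c a) w2 = pt y2 w2"
      using y2(2) f2 unfolding H_adj_def by (auto simp: mx_def)
    have m1: "(y1, w1) \<in> {iw\<in>Inc. snd iw \<in> c}" using w1 y1 unfolding Inc_def by auto
    have m2: "(y2, w2) \<in> {iw\<in>Inc. snd iw \<in> c}" using w2 y2 unfolding Inc_def by auto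
    have ne: "(y1, w1) \<noteq> (y2, w2)"
    proof
      assume eq: "(y1, w1) = (y2, w2)"
      have "w1 \<in> c" using w1 by auto
      then have "w1 = a \<or> w1 = b" using ab by auto
      then show False using w1(2) w2(2) eq ab by (auto simp: mx_def)
    qed
    have "card {(y1, w1), (y2, w2)} \<le> card {iw\<in>Inc. snd iw \<in> c}"
      by (rule card_mono) (use fInc m1 m2 in auto)
    then show ?thesis using ne by simp
  qed
  have b: "card {c\<in>C-P. snd iw \<in> c} + (if fst (fst iw) \<in> C then 1 else 0) \<le> 2" if iw: "iw \<in> Inc" for iw
  proof -
    obtain y w where yw: "iw = (y, w)" "y \<in> I" "w \<in> fst y" using iw unfolding Inc_def by auto
    define D0 where "D0 = {c\<in>C. w\<in>c}"
    have fD0: "finite D0" using fC unfolding D0_def by auto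
    have d0: "card D0 \<le> 2" unfolding D0_def C_def using Cedges_deg[OF pc] .
    have sub: "{c\<in>C-P. w \<in> c} \<subseteq> D0 - {fst y}" using yw unfolding D0_def P_def by auto
    show ?thesis
    proof (cases "fst y \<in> C")
      case True
      then have "fst y \<in> D0" using yw unfolding D0_def by auto
      then have "card (D0 - {fst y}) = card D0 - 1" using fD0 by simp
      moreover have "card {c\<in>C-P. w \<in> c} \<le> card (D0 - {fst y})"
        using sub fD0 by (intro card_mono) auto
      ultimately show ?thesis using True d0 yw by auto
    next
      case False
      have "card {c\<in>C-P. w \<in> c} \<le> card (D0 - {fst y})"
        using sub fD0 by (intro card_mono) auto
      also have "\<dots> \<le> card D0" using fD0 by (intro card_mono) auto
      finally show ?thesis using False d0 yw by auto
    qed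
  qed
  have c: "(\<Sum>c\<in>C-P. card {iw\<in>Inc. snd iw \<in> c}) = (\<Sum>iw\<in>Inc. card {c\<in>C-P. snd iw \<in> c})"
    by (rule double_count) (use fC fInc in auto)
  have e: "(\<Sum>iw\<in>Inc. g (fst iw)) = (\<Sum>y\<in>I. 2 * g y)" for g :: "_ \<Rightarrow> nat"
  proof -
    have fy: "\<forall>y\<in>I. finite (fst y)" using I_card2 by (auto intro: card_ge_0_finite)
    have "(\<Sum>y\<in>I. \<Sum>w\<in>fst y. g y) = (\<Sum>(y,w)\<in>Sigma I fst. g y)"
      by (rule sum.Sigma[OF fI fy])
    then have "(\<Sum>iw\<in>Inc. g (fst iw)) = (\<Sum>y\<in>I. \<Sum>w\<in>fst y. g y)"
      unfolding Inc_def by (simp add: case_prod_beta')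
    also have "\<dots> = (\<Sum>y\<in>I. 2 * g y)" using I_card2 by (intro sum.cong) auto
    finally show ?thesis .
  qed
  have d: "(\<Sum>iw\<in>Inc. (if fst (fst iw) \<in> C then 1 else 0)) = 2 * card (C \<inter> P)"
  proof -
    have "(\<Sum>iw\<in>Inc. (if fst (fst iw) \<in> C then 1 else 0)) = (\<Sum>y\<in>I. 2 * (if fst y \<in> C then 1 else (0::nat)))"
      using e[of "\<lambda>y. if fst y \<in> C then 1 else 0"] by simp
    also have "\<dots> = 2 * card {y\<in>I. fst y \<in> C}"
      using fI by (simp add: sum_distrib_left[symmetric] sum.If_cases Int_def)
    also have "card {y\<in>I. fst y \<in> C} = card (fst ` {y\<in>I. fst y \<in> C})"
      by (rule card_image[symmetric]) (use I_inj in \<open>auto intro: inj_on_subset\<close>)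
    also have "fst ` {y\<in>I. fst y \<in> C} = C \<inter> P" unfolding P_def by auto
    finally show ?thesis .
  qed
  have cInc: "card Inc = 2 * card I"
    using e[of "\<lambda>_. 1"] by simp
  have "2 * card (C - P) = (\<Sum>c\<in>C-P. 2)" by simp
  also have "\<dots> \<le> (\<Sum>c\<in>C-P. card {iw\<in>Inc. snd iw \<in> c})" using a by (intro sum_mono) auto
  also have "\<dots> = (\<Sum>iw\<in>Inc. card {c\<in>C-P. snd iw \<in> c})" by (rule c)
  finally have s1: "2 * card (C - P) \<le> (\<Sum>iw\<in>Inc. card {c\<in>C-P. snd iw \<in> c})" .
  have "(\<Sum>iw\<in>Inc. card {c\<in>C-P. snd iw \<in> c}) + (\<Sum>iw\<in>Inc. (if fst (fst iw) \<in> C then 1 else 0))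
      = (\<Sum>iw\<in>Inc. card {c\<in>C-P. snd iw \<in> c} + (if fst (fst iw) \<in> C then 1 else 0))"
    by (simp add: sum.distrib)
  also have "\<dots> \<le> (\<Sum>iw\<in>Inc. 2)" using b by (intro sum_mono) auto
  also have "\<dots> = 2 * card Inc" by simp
  finally have s2: "(\<Sum>iw\<in>Inc. card {c\<in>C-P. snd iw \<in> c}) + 2 * card (C \<inter> P) \<le> 4 * card I"
    using d cInc by simp
  have CU: "C = (C - P) \<union> (C \<inter> P)" by blast
  have "card C = card (C - P) + card (C \<inter> P)"
    by (subst CU, rule card_Un_disjoint) (use fC in auto)
  then have "2 * card C \<le> 4 * card I" using s1 s2 by linarith
  then show ?thesis using card_Cedges[OF pc] unfolding C_def by linarith
qed

end


definition ledges :: "'a list \<Rightarrow> 'a set set" where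
  "ledges p = (\<lambda>i. pedge p i) ` {i. Suc i < length p}"

lemma Cedges_UN: "Cedges Ps = (\<Union>p\<in>Ps. ledges p)"
  unfolding Cedges_def Pairs_def ledges_def by force

lemma is_path_ledges: "is_path E p \<longleftrightarrow> p \<noteq> [] \<and> distinct p \<and> ledges p \<subseteq> E"
  unfolding is_path_def ledges_def pedge_def by auto

lemma ledges_rev: "ledges (rev p) = ledges p"
proof -
  have *: "pedge (rev p) i = pedge p (length p - Suc (Suc i))" if "Suc i < length p" for i
    using that unfolding pedge_def by (auto simp: rev_nth Suc_diff_Suc)
  show ?thesis
  proof
    show "ledges (rev p) \<subseteq> ledges p"
    proof
      fix c assume "c \<in> ledges (rev p)"
      then obtain i where i: "Suc i < length p" "c = pedge (rev p) i" unfolding ledges_def by auto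
      have "Suc (length p - Suc (Suc i)) < length p" using i(1) by auto
      then show "c \<in> ledges p" using *[OF i(1)] i(2) unfolding ledges_def by blast
    qed
    show "ledges p \<subseteq> ledges (rev p)"
    proof
      fix c assume "c \<in> ledges p"
      then obtain i where i: "Suc i < length p" "c = pedge p i" unfolding ledges_def by auto
      define j where "j = length p - Suc (Suc i)"
      have j: "Suc j < length p" "length p - Suc (Suc j) = i" using i(1) unfolding j_def by auto
      have "c = pedge (rev p) j" using *[OF j(1)] j(2) i(2) by simp
      then show "c \<in> ledges (rev p)" using j(1) unfolding ledges_def by auto
    qed
  qed
qed

lemma pedge_appA: "Suc i < length xs \<Longrightarrow> pedge (xs @ ys) i = pedge xs i"
  unfolding pedge_def by (simp add: nth_append)
lemma pedge_appB: "pedge (xs @ ys) (length xs + j) = pedge ys j"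
  unfolding pedge_def by (simp add: nth_append)
lemma pedge_appC: "xs \<noteq> [] \<Longrightarrow> ys \<noteq> [] \<Longrightarrow> pedge (xs @ ys) (length xs - 1) = {last xs, hd ys}"
  unfolding pedge_def by (simp add: nth_append last_conv_nth hd_conv_nth)

lemma ledges_append:
  assumes "xs \<noteq> []" "ys \<noteq> []"
  shows "ledges (xs @ ys) = ledges xs \<union> ledges ys \<union> {{last xs, hd ys}}"
proof
  let ?n = "length xs"
  show "ledges (xs @ ys) \<subseteq> ledges xs \<union> ledges ys \<union> {{last xs, hd ys}}"
  proof
    fix c assume "c \<in> ledges (xs @ ys)"
    then obtain i where i: "Suc i < length (xs @ ys)" "c = pedge (xs @ ys) i" unfolding ledges_def by auto
    consider "Suc i < ?n" | "i = ?n - 1" | "?n \<le> i" by linarith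
    then show "c \<in> ledges xs \<union> ledges ys \<union> {{last xs, hd ys}}"
    proof cases
      case 1
      then have "c = pedge xs i" using pedge_appA i(2) by simp
      then show ?thesis using 1 unfolding ledges_def by blast
    next
      case 2
      then have "c = {last xs, hd ys}" using pedge_appC[OF assms] i(2) by simp
      then show ?thesis by blast
    next
      case 3
      define j where "j = i - ?n"
      have ij: "i = ?n + j" using 3 unfolding j_def by simp
      then have "c = pedge ys j" using pedge_appB i(2) by simp
      moreover have "Suc j < length ys" using i(1) ij by simp
      ultimately show ?thesis unfolding ledges_def by blast
    qed
  qed
  show "ledges xs \<union> ledges ys \<union> {{last xs, hd ys}} \<subseteq> ledges (xs @ ys)"
  proof
    fix c assume "c \<in> ledges xs \<union> ledges ys \<union> {{last xs, hd ys}}"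
    then consider "c \<in> ledges xs" | "c \<in> ledges ys" | "c = {last xs, hd ys}" by blast
    then show "c \<in> ledges (xs @ ys)"
    proof cases
      case 1
      then obtain i where i: "Suc i < ?n" "c = pedge xs i" unfolding ledges_def by auto
      then have "c = pedge (xs @ ys) i" using pedge_appA[of i xs ys] by simp
      moreover have "Suc i < length (xs @ ys)" using i by simp
      ultimately show ?thesis unfolding ledges_def by blast
    next
      case 2
      then obtain j where j: "Suc j < length ys" "c = pedge ys j" unfolding ledges_def by auto
      then have "c = pedge (xs @ ys) (?n + j)" using pedge_appB[of xs ys j] by simp
      moreover have "Suc (?n + j) < length (xs @ ys)" using j by simp
      ultimately show ?thesis unfolding ledges_def by blast
    next
      case 3
      then have "c = pedge (xs @ ys) (?n - 1)" using pedge_appC[OF assms] by simp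
      moreover have "Suc (?n - 1) < length (xs @ ys)" using assms by (cases xs; cases ys) auto
      ultimately show ?thesis unfolding ledges_def by blast
    qed
  qed
qed

lemma endpoint_of_path:
  assumes "distinct p" "w \<in> set p"
    and deg: "\<And>g1 g2. g1 \<in> ledges p \<Longrightarrow> g2 \<in> ledges p \<Longrightarrow> w \<in> g1 \<Longrightarrow> w \<in> g2 \<Longrightarrow> g1 = g2"
  shows "w = hd p \<or> w = last p"
proof -
  obtain k where k: "k < length p" "p ! k = w" using assms(2) by (meson in_set_conv_nth)
  show ?thesis
  proof (rule ccontr)
    assume "\<not> (w = hd p \<or> w = last p)"
    moreover have ne: "p \<noteq> []" using k by auto
    ultimately have "k \<noteq> 0" "k \<noteq> length p - 1" using k
      by (metis hd_conv_nth, metis last_conv_nth)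
    then have k2: "0 < k" "Suc k < length p" using k by auto
    have "pedge p (k - 1) \<in> ledges p" "pedge p k \<in> ledges p" unfolding ledges_def using k2 by auto
    moreover have "w \<in> pedge p (k - 1)" "w \<in> pedge p k" unfolding pedge_def using k k2 by auto
    ultimately have "pedge p (k - 1) = pedge p k" using deg by blast
    then have "p ! (k - 1) = p ! Suc k \<or> p ! (k - 1) = p ! k"
      unfolding pedge_def using k2 by (auto simp: doubleton_eq_iff)
    then show False using assms(1) k k2 by (auto simp: nth_eq_iff_index_eq)
  qed
qed


definition Dset :: "'a hvert list \<Rightarrow> 'a hvert set" where
  "Dset \<sigma> = {x \<in> greedy_mis H_adj \<sigma>. \<exists>b\<in>fst x. pt x b = 1 \<and>
     (\<exists>i j. i < j \<and> j < length \<sigma> \<and> \<sigma> ! i = x \<and> \<sigma> ! j \<in> greedy_mis H_adj \<sigma> \<and> b \<in> fst (\<sigma> ! j) \<and> pt (\<sigma> ! j) b = 0)}"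

definition Sset :: "'a hvert list \<Rightarrow> nat \<Rightarrow> 'a hvert set" where
  "Sset \<sigma> m = {x \<in> greedy_mis H_adj \<sigma> - Dset \<sigma>. \<exists>j. m \<le> j \<and> j < length \<sigma> \<and> \<sigma> ! j = x}"

definition covers :: "'a set \<Rightarrow> 'a list set \<Rightarrow> bool" where
  "covers V Ps \<longleftrightarrow> (\<forall>v\<in>V. \<exists>p\<in>Ps. v \<in> set p)"

lemma merge_paths:
  assumes pc: "path_cover V E Ps" and cv: "covers V Ps"
    and pa: "pa \<in> Ps" and pb: "pb \<in> Ps" and ne: "pa \<noteq> pb"
    and a: "a = hd pa \<or> a = last pa" and b: "b = hd pb \<or> b = last pb" and ab: "{a,b} \<in> E"
  shows "\<exists>Ps'. path_cover V E Ps' \<and> covers V Ps' \<and> Cedges Ps' = insert {a,b} (Cedges Ps)"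
proof -
  have ppa: "is_path E pa" "set pa \<subseteq> V" and ppb: "is_path E pb" "set pb \<subseteq> V"
    using pc pa pb unfolding path_cover_def by auto
  have disj: "set pa \<inter> set pb = {}" using pc pa pb ne unfolding path_cover_def by auto
  have nea: "pa \<noteq> []" and neb: "pb \<noteq> []" using ppa ppb unfolding is_path_def by auto
  define qa where "qa = (if last pa = a then pa else rev pa)"
  define qb where "qb = (if hd pb = b then pb else rev pb)"
  have lqa: "last qa = a" using a nea unfolding qa_def by (auto simp: last_rev)
  have hqb: "hd qb = b" using b neb unfolding qb_def by (auto simp: hd_rev)
  have sqa: "set qa = set pa" and sqb: "set qb = set pb" unfolding qa_def qb_def by auto
  have eqa: "ledges qa = ledges pa" and eqb: "ledges qb = ledges pb"
    unfolding qa_def qb_def by (auto simp: ledges_rev)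
  have dqa: "distinct qa" and dqb: "distinct qb"
    using ppa ppb unfolding qa_def qb_def is_path_def by auto
  have neqa: "qa \<noteq> []" and neqb: "qb \<noteq> []" using nea neb unfolding qa_def qb_def by auto
  define q where "q = qa @ qb"
  have lq: "ledges q = ledges pa \<union> ledges pb \<union> {{a,b}}"
    unfolding q_def using ledges_append[OF neqa neqb] eqa eqb lqa hqb by simp
  have sq: "set q = set pa \<union> set pb" unfolding q_def using sqa sqb by simp
  have pq: "is_path E q"
    unfolding is_path_ledges
  proof (intro conjI)
    show "q \<noteq> []" unfolding q_def using neqa by simp
    show "distinct q" unfolding q_def using dqa dqb disj sqa sqb by simp
    show "ledges q \<subseteq> E" unfolding lq using ppa ppb ab unfolding is_path_ledges by auto
  qed
  define Ps' where "Ps' = insert q (Ps - {pa, pb})"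
  have others: "set r \<inter> set q = {}" if "r \<in> Ps - {pa,pb}" for r
  proof -
    have "set r \<inter> set pa = {}" "set r \<inter> set pb = {}" using pc that pa pb unfolding path_cover_def by auto
    then show ?thesis unfolding sq by blast
  qed
  have pc': "path_cover V E Ps'"
    unfolding path_cover_def
  proof (intro conjI)
    show "finite Ps'" using pc unfolding Ps'_def path_cover_def by auto
  next
    show "\<forall>p\<in>Ps'. is_path E p \<and> set p \<subseteq> V"
      using pq sq ppa ppb pc unfolding Ps'_def path_cover_def by auto
  next
    show "\<forall>p\<in>Ps'. \<forall>p'\<in>Ps'. p \<noteq> p' \<longrightarrow> set p \<inter> set p' = {}"
    proof (intro ballI impI)
    fix p p' assume pp: "p \<in> Ps'" "p' \<in> Ps'" "p \<noteq> p'"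
    show "set p \<inter> set p' = {}"
    proof (cases "p = q")
      case True
      then have "p' \<in> Ps - {pa,pb}" using pp unfolding Ps'_def by auto
      then show ?thesis using others True by blast
    next
      case False
      then have p1: "p \<in> Ps - {pa,pb}" using pp unfolding Ps'_def by auto
      show ?thesis
      proof (cases "p' = q")
        case True then show ?thesis using others[OF p1] by blast
      next
        case False
        then have "p' \<in> Ps - {pa,pb}" using pp unfolding Ps'_def by auto
        then show ?thesis using p1 pp(3) pc unfolding path_cover_def by auto
      qed
    qed
    qed
  qed
  have cv': "covers V Ps'"
    unfolding covers_def
  proof
    fix v assume "v \<in> V"
    then obtain p where p: "p \<in> Ps" "v \<in> set p" using cv unfolding covers_def by blast
    show "\<exists>p\<in>Ps'. v \<in> set p"
    proof (cases "p = pa \<or> p = pb")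
      case True then show ?thesis using p sq unfolding Ps'_def by auto
    next
      case False then show ?thesis using p unfolding Ps'_def by auto
    qed
  qed
  have "Cedges Ps' = ledges q \<union> (\<Union>r\<in>Ps - {pa,pb}. ledges r)"
    unfolding Cedges_UN Ps'_def by simp
  also have "\<dots> = insert {a,b} (Cedges Ps)"
    unfolding lq Cedges_UN using pa pb by blast
  finally show ?thesis using pc' cv' by blast
qed

lemma ledges_single: "ledges [v] = {}"
  unfolding ledges_def by auto

lemma base_cover:
  assumes "finite V"
  shows "path_cover V E ((\<lambda>v. [v]) ` V) \<and> covers V ((\<lambda>v. [v]) ` V) \<and> Cedges ((\<lambda>v. [v]) ` V) = {}"
  using assms unfolding path_cover_def covers_def Cedges_UN is_path_def
  by (auto simp: ledges_single)


context
  fixes V :: "'a set" and E K \<sigma>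
  assumes sg: "simple_graph V E" and Kpos: "K > 0"
    and sig: "\<sigma> \<in> permutations_of_set (H_vertices E K)"
begin

abbreviation "II \<equiv> greedy_mis H_adj \<sigma>"

lemmas isub = I_sub[OF sg Kpos sig]
lemmas iport = I_port[OF sg Kpos sig]
lemmas iinj = I_inj[OF sg Kpos sig]
lemmas iindep = I_indep[OF sg Kpos sig]
lemmas dsg = dsig[OF sg Kpos sig]
lemmas ssg = setsig[OF sg Kpos sig]

lemma S_sub: "Sset \<sigma> m \<subseteq> II - Dset \<sigma>"
  unfolding Sset_def by auto

lemma port_le1: "y \<in> II \<Longrightarrow> w \<in> fst y \<Longrightarrow> pt y w \<le> 1"
proof -
  assume a: "y \<in> II" "w \<in> fst y"
  have "y \<in> H_vertices E K" using a(1) isub by (rule subsetD[rotated])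
  then show ?thesis using a(2) by (rule H_mem(2))
qed

lemma not_in_S: "m < length \<sigma> \<Longrightarrow> \<sigma> ! m \<notin> Sset \<sigma> (Suc m)"
proof
  assume m: "m < length \<sigma>" and "\<sigma> ! m \<in> Sset \<sigma> (Suc m)"
  then obtain j where j: "Suc m \<le> j" "j < length \<sigma>" "\<sigma> ! j = \<sigma> ! m" unfolding Sset_def by blast
  then have "j = m" using nth_eq_iff_index_eq[OF dsg j(2) m] by simp
  then show False using j(1) by simp
qed

lemma deg1:
  assumes m: "m < length \<sigma>" and x: "\<sigma> ! m \<in> II" and w: "w \<in> fst (\<sigma> ! m)"
    and g: "g1 \<in> fst ` Sset \<sigma> (Suc m)" "g2 \<in> fst ` Sset \<sigma> (Suc m)" "w \<in> g1" "w \<in> g2"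
  shows "g1 = g2"
proof (rule ccontr)
  assume ne: "g1 \<noteq> g2"
  obtain y1 where y1: "y1 \<in> Sset \<sigma> (Suc m)" "g1 = fst y1" using g by blast
  obtain y2 where y2: "y2 \<in> Sset \<sigma> (Suc m)" "g2 = fst y2" using g by blast
  have i1: "y1 \<in> II" "y2 \<in> II" using y1 y2 S_sub by auto
  have d: "y1 \<noteq> \<sigma> ! m" "y2 \<noteq> \<sigma> ! m" "y1 \<noteq> y2" using y1 y2 not_in_S[OF m] ne by auto
  have w1: "w \<in> fst y1" using g(3) y1(2) by simp
  have w2: "w \<in> fst y2" using g(4) y2(2) by simp
  have "pt y1 w \<noteq> pt (\<sigma> ! m) w" by (rule iport[OF i1(1) x d(1) w1 w])
  moreover have "pt y2 w \<noteq> pt (\<sigma> ! m) w" by (rule iport[OF i1(2) x d(2) w2 w])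
  moreover have "pt y1 w \<noteq> pt y2 w" by (rule iport[OF i1(1) i1(2) d(3) w1 w2])
  moreover have "pt y1 w \<le> 1" "pt y2 w \<le> 1" "pt (\<sigma> ! m) w \<le> 1"
    using port_le1[OF i1(1) w1] port_le1[OF i1(2) w2] port_le1[OF x w] by auto
  ultimately show False by linarith
qed

definition cp :: "'a set \<Rightarrow> 'a hvert" where "cp g = inv_into II fst g"

lemma cp_props: "g \<in> fst ` T \<Longrightarrow> T \<subseteq> II \<Longrightarrow> cp g \<in> T \<and> fst (cp g) = g"
proof -
  assume g: "g \<in> fst ` T" and T: "T \<subseteq> II"
  then obtain y where y: "y \<in> T" "g = fst y" by blast
  have "y \<in> II" using y(1) T by blast
  then have "cp g = y" unfolding cp_def y(2) by (rule inv_into_f_f[OF iinj])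
  then show ?thesis using y by auto
qed

lemma alternation:
  assumes dp: "distinct p" and T: "T \<subseteq> II" and le: "ledges p \<subseteq> fst ` T"
    and st: "Suc 0 < length p" and h: "pt (cp (pedge p 0)) (p ! 0) = 1"
  shows "\<forall>i. Suc i < length p \<longrightarrow> pt (cp (pedge p i)) (p ! i) = 1"
proof (intro allI)
  fix i show "Suc i < length p \<longrightarrow> pt (cp (pedge p i)) (p ! i) = 1"
  proof (induction i)
    case 0 then show ?case using h by simp
  next
    case (Suc i)
    show ?case
    proof
      assume si: "Suc (Suc i) < length p"
      have e1: "pedge p i \<in> fst ` T" "pedge p (Suc i) \<in> fst ` T" using le si unfolding ledges_def by auto
      define y where "y = cp (pedge p i)"
      define y' where "y' = cp (pedge p (Suc i))"
      have y: "y \<in> II" "fst y = {p ! i, p ! Suc i}" using cp_props[OF e1(1) T] T unfolding y_def pedge_def by auto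
      have y': "y' \<in> II" "fst y' = {p ! Suc i, p ! Suc (Suc i)}" using cp_props[OF e1(2) T] T unfolding y'_def pedge_def by auto
      have hi: "pt y (p ! i) = 1" using Suc si unfolding y_def by simp
      have dd: "p ! i \<noteq> p ! Suc i" "p ! i \<noteq> p ! Suc (Suc i)" using dp si by (auto simp: nth_eq_iff_index_eq)
      have "pt y (p ! Suc i) = 0"
        by (rule H_no11[OF sg]) (use y isub hi dd in auto)
      moreover have "y \<noteq> y'" using y y' dd by (auto simp: doubleton_eq_iff)
      then have "pt y' (p ! Suc i) \<noteq> pt y (p ! Suc i)" by (intro iport) (use y y' in auto)
      moreover have "pt y' (p ! Suc i) \<le> 1" using port_le1 y' by auto
      ultimately show "pt (cp (pedge p (Suc i))) (p ! Suc i) = 1" unfolding y'_def by linarith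
    qed
  qed
qed

lemma same_path_D:
  assumes m: "m < length \<sigma>" and x: "\<sigma> ! m \<in> II"
    and nep: "p \<noteq> []" and dp: "distinct p" and le: "ledges p \<subseteq> fst ` Sset \<sigma> (Suc m)"
    and hd: "hd p = a" and lst: "last p = b" and ab: "a \<noteq> b" and fx: "fst (\<sigma> ! m) = {a, b}"
    and a0: "pt (\<sigma> ! m) a = 0"
  shows "\<sigma> ! m \<in> Dset \<sigma>"
proof -
  let ?x = "\<sigma> ! m"
  let ?T = "Sset \<sigma> (Suc m)"
  have T: "?T \<subseteq> II" using S_sub by auto
  have st: "Suc 0 < length p"
  proof (rule ccontr)
    assume "\<not> Suc 0 < length p"
    then have "length p = 1" using nep by (cases p) auto
    then have "hd p = last p" by (cases p) auto
    then show False using hd lst ab by simp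
  qed
  have p0: "p ! 0 = a" using hd nep by (simp add: hd_conv_nth)
  have pl: "p ! (length p - 1) = b" using lst nep by (simp add: last_conv_nth)
  have e0: "pedge p 0 \<in> fst ` ?T" using le st unfolding ledges_def by auto
  define y0 where "y0 = cp (pedge p 0)"
  have y0: "y0 \<in> ?T" "fst y0 = {p ! 0, p ! 1}" using cp_props[OF e0 T] unfolding y0_def pedge_def by auto
  have "y0 \<noteq> ?x" using y0 not_in_S[OF m] by auto
  then have "pt y0 a \<noteq> pt ?x a" by (intro iport) (use y0 T x p0 fx in auto)
  moreover have "pt y0 a \<le> 1" by (rule port_le1) (use y0 T p0 in auto)
  ultimately have "pt y0 a = 1" using a0 by linarith
  then have alt: "\<forall>i. Suc i < length p \<longrightarrow> pt (cp (pedge p i)) (p ! i) = 1"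
    using alternation[OF dp T le st] p0 unfolding y0_def by simp
  define k where "k = length p - 2"
  have k: "Suc k < length p" "Suc k = length p - 1" using st unfolding k_def by auto
  have ek: "pedge p k \<in> fst ` ?T" using le k unfolding ledges_def by auto
  define yl where "yl = cp (pedge p k)"
  have yl: "yl \<in> ?T" "fst yl = {p ! k, p ! Suc k}" using cp_props[OF ek T] unfolding yl_def pedge_def by auto
  have dk: "p ! k \<noteq> p ! Suc k" using dp k by (auto simp: nth_eq_iff_index_eq)
  have "pt yl (p ! k) = 1" using alt k unfolding yl_def by auto
  then have ylb: "pt yl b = 0"
    using H_no11[OF sg, of yl K "p ! k" "p ! Suc k"] yl T isub dk k pl by auto
  have "yl \<noteq> ?x" using yl not_in_S[OF m] by auto
  then have "pt yl b \<noteq> pt ?x b" by (intro iport) (use yl T x pl k fx in auto)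
  moreover have "pt ?x b \<le> 1" using port_le1 x fx by auto
  ultimately have xb: "pt ?x b = 1" using ylb by linarith
  obtain j where j: "Suc m \<le> j" "j < length \<sigma>" "\<sigma> ! j = yl" using yl(1) unfolding Sset_def by auto
  have "b \<in> fst yl" using yl pl k by auto
  moreover have "yl \<in> II" using yl T by auto
  ultimately have ex: "\<exists>i j. i < j \<and> j < length \<sigma> \<and> \<sigma> ! i = ?x \<and> \<sigma> ! j \<in> II \<and> b \<in> fst (\<sigma> ! j) \<and> pt (\<sigma> ! j) b = 0"
    using j ylb by (intro exI[of _ m] exI[of _ j]) auto
  have "b \<in> fst ?x" using fx by simp
  then show ?thesis unfolding Dset_def using x xb ex by blast
qed

end


context
  fixes V :: "'a set" and E K \<sigma>
  assumes sg: "simple_graph V E" and Kpos: "K > 0"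
    and sig: "\<sigma> \<in> permutations_of_set (H_vertices E K)"
begin

abbreviation "JJ \<equiv> greedy_mis H_adj \<sigma>"

lemmas isub_8 = I_sub[OF sg Kpos sig]
lemmas iinj_8 = I_inj[OF sg Kpos sig]
lemmas dsg_8 = dsig[OF sg Kpos sig]
lemmas ssg_8 = setsig[OF sg Kpos sig]
lemmas deg1_8 = deg1[OF sg Kpos sig]
lemmas same_path_D_8 = same_path_D[OF sg Kpos sig]
lemmas port_le1_8 = port_le1[OF sg Kpos sig]

lemma step:
  assumes m: "m < length \<sigma>" and pc: "path_cover V E Ps" and cv: "covers V Ps"
    and ce: "Cedges Ps = fst ` Sset \<sigma> (Suc m)"
  shows "\<exists>Ps'. path_cover V E Ps' \<and> covers V Ps' \<and> Cedges Ps' = fst ` Sset \<sigma> m"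
proof (cases "\<sigma> ! m \<in> JJ - Dset \<sigma>")
  case False
  have "Sset \<sigma> m = Sset \<sigma> (Suc m)"
  proof
    show "Sset \<sigma> (Suc m) \<subseteq> Sset \<sigma> m" unfolding Sset_def using Suc_leD by blast
    show "Sset \<sigma> m \<subseteq> Sset \<sigma> (Suc m)"
    proof
      fix x assume "x \<in> Sset \<sigma> m"
      then obtain j where j: "x \<in> JJ - Dset \<sigma>" "m \<le> j" "j < length \<sigma>" "\<sigma> ! j = x"
        unfolding Sset_def by blast
      have "j \<noteq> m" using j False by auto
      then have "Suc m \<le> j" using j by simp
      then show "x \<in> Sset \<sigma> (Suc m)" unfolding Sset_def using j by blast
    qed
  qed
  then show ?thesis using pc cv ce by auto
next
  case True
  let ?x = "\<sigma> ! m"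
  have SI: "Sset \<sigma> m = insert ?x (Sset \<sigma> (Suc m))"
  proof
    have "?x \<in> Sset \<sigma> m" unfolding Sset_def using True m by blast
    moreover have "Sset \<sigma> (Suc m) \<subseteq> Sset \<sigma> m" unfolding Sset_def using Suc_leD by blast
    ultimately show "insert ?x (Sset \<sigma> (Suc m)) \<subseteq> Sset \<sigma> m" by blast
    show "Sset \<sigma> m \<subseteq> insert ?x (Sset \<sigma> (Suc m))"
    proof
      fix x assume "x \<in> Sset \<sigma> m"
      then obtain j where j: "x \<in> JJ - Dset \<sigma>" "m \<le> j" "j < length \<sigma>" "\<sigma> ! j = x"
        unfolding Sset_def by blast
      show "x \<in> insert ?x (Sset \<sigma> (Suc m))"
      proof (cases "j = m")
        case True then show ?thesis using j by simp
      next
        case False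
        then have "Suc m \<le> j" using j by simp
        then show ?thesis unfolding Sset_def using j by blast
      qed
    qed
  qed
  have xI: "?x \<in> JJ" using True by blast
  have xnD: "?x \<notin> Dset \<sigma>" using True by blast
  have xH: "?x \<in> H_vertices E K" using xI isub_8 by blast
  have xE: "fst ?x \<in> E" using H_mem(1)[OF xH] .
  obtain a b where ab: "a \<noteq> b" "fst ?x = {a, b}" using card2_edge[OF sg xE] by blast
  have aV: "a \<in> V" and bV: "b \<in> V" using sg xE ab unfolding simple_graph_def by auto
  obtain pa where pa: "pa \<in> Ps" "a \<in> set pa" using cv aV unfolding covers_def by blast
  obtain pb where pb: "pb \<in> Ps" "b \<in> set pb" using cv bV unfolding covers_def by blast
  have ppa: "is_path E pa" using pc pa unfolding path_cover_def by auto
  have ppb: "is_path E pb" using pc pb unfolding path_cover_def by auto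
  have lpa: "ledges pa \<subseteq> fst ` Sset \<sigma> (Suc m)" using pa ce unfolding Cedges_UN by blast
  have lpb: "ledges pb \<subseteq> fst ` Sset \<sigma> (Suc m)" using pb ce unfolding Cedges_UN by blast
  have ea: "a = hd pa \<or> a = last pa"
  proof (rule endpoint_of_path)
    show "distinct pa" using ppa unfolding is_path_def by auto
    show "a \<in> set pa" by (rule pa(2))
    fix g1 g2 assume "g1 \<in> ledges pa" "g2 \<in> ledges pa" "a \<in> g1" "a \<in> g2"
    then show "g1 = g2" using deg1_8[OF m xI, of a g1 g2] lpa ab by auto
  qed
  have eb: "b = hd pb \<or> b = last pb"
  proof (rule endpoint_of_path)
    show "distinct pb" using ppb unfolding is_path_def by auto
    show "b \<in> set pb" by (rule pb(2))
    fix g1 g2 assume "g1 \<in> ledges pb" "g2 \<in> ledges pb" "b \<in> g1" "b \<in> g2"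
    then show "g1 = g2" using deg1_8[OF m xI, of b g1 g2] lpb ab by auto
  qed
  show ?thesis
  proof (cases "pa = pb")
    case True
    have dpa: "distinct pa" and nepa: "pa \<noteq> []" using ppa unfolding is_path_def by auto
    have hl: "(hd pa = a \<and> last pa = b) \<or> (hd pa = b \<and> last pa = a)"
      using ea eb True ab(1) by auto
    define q where "q = (if hd pa = a then pa else rev pa)"
    have q: "hd q = a" "last q = b" using hl nepa unfolding q_def by (auto simp: hd_rev last_rev)
    have dq: "distinct q" and neq: "q \<noteq> []" using dpa nepa unfolding q_def by auto
    have lq: "ledges q \<subseteq> fst ` Sset \<sigma> (Suc m)" using lpa unfolding q_def by (auto simp: ledges_rev)
    have a1: "pt ?x a \<noteq> 0"
    proof
      assume "pt ?x a = 0"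
      then have "?x \<in> Dset \<sigma>" using same_path_D_8[OF m xI neq dq lq q(1) q(2) ab(1) ab(2)] by simp
      then show False using xnD by simp
    qed
    have b1: "pt ?x b \<noteq> 0"
    proof
      assume "pt ?x b = 0"
      moreover have "fst ?x = {b, a}" using ab by auto
      moreover have "ledges (rev q) \<subseteq> fst ` Sset \<sigma> (Suc m)" using lq by (simp add: ledges_rev)
      moreover have "hd (rev q) = b" "last (rev q) = a" using q neq by (auto simp: hd_rev last_rev)
      ultimately have "?x \<in> Dset \<sigma>" using same_path_D_8[OF m xI, of "rev q" b a] dq neq ab(1) by auto
      then show False using xnD by simp
    qed
    have "pt ?x a \<le> 1" "pt ?x b \<le> 1" using port_le1_8[OF xI] ab by auto
    then have "pt ?x a = 1" "pt ?x b = 1" using a1 b1 by auto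
    moreover have "pt ?x b = 0"
      by (rule H_no11[OF sg xH, of a b]) (use ab \<open>pt ?x a = 1\<close> in auto)
    ultimately show ?thesis by simp
  next
    case False
    obtain Ps' where Ps': "path_cover V E Ps'" "covers V Ps'" "Cedges Ps' = insert {a,b} (Cedges Ps)"
      using merge_paths[OF pc cv pa(1) pb(1) False ea eb] xE ab by auto
    have "Cedges Ps' = fst ` Sset \<sigma> m" using Ps'(3) ce SI ab by simp
    then show ?thesis using Ps' by blast
  qed
qed

lemma cover_exists:
  "k \<le> length \<sigma> \<Longrightarrow> \<exists>Ps. path_cover V E Ps \<and> covers V Ps \<and> Cedges Ps = fst ` Sset \<sigma> (length \<sigma> - k)"
proof (induction k)
  case 0
  have fV: "finite V" using sg unfolding simple_graph_def by auto
  have "Sset \<sigma> (length \<sigma>) = {}" unfolding Sset_def by auto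
  then show ?case using base_cover[OF fV, of E] by auto
next
  case (Suc k)
  then obtain Ps where Ps: "path_cover V E Ps" "covers V Ps" "Cedges Ps = fst ` Sset \<sigma> (length \<sigma> - k)"
    by auto
  define m where "m = length \<sigma> - Suc k"
  have m: "m < length \<sigma>" "Suc m = length \<sigma> - k" using Suc.prems unfolding m_def by auto
  show ?case using step[OF m(1) Ps(1,2)] Ps(3) m unfolding m_def by auto
qed

lemma card_ID_le_rho: "card (JJ - Dset \<sigma>) \<le> rho V E"
proof -
  have S0: "Sset \<sigma> 0 = JJ - Dset \<sigma>"
  proof
    show "Sset \<sigma> 0 \<subseteq> JJ - Dset \<sigma>" unfolding Sset_def by auto
    show "JJ - Dset \<sigma> \<subseteq> Sset \<sigma> 0"
    proof
      fix x assume x: "x \<in> JJ - Dset \<sigma>"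
      then have "x \<in> set \<sigma>" using greedy_subset_set[of H_adj \<sigma>] by blast
      then obtain j where "j < length \<sigma>" "\<sigma> ! j = x" by (meson in_set_conv_nth)
      then show "x \<in> Sset \<sigma> 0" unfolding Sset_def using x by blast
    qed
  qed
  obtain Ps where Ps: "path_cover V E Ps" "Cedges Ps = fst ` (JJ - Dset \<sigma>)"
    using cover_exists[of "length \<sigma>"] S0 by auto
  have "card (JJ - Dset \<sigma>) = card (fst ` (JJ - Dset \<sigma>))"
    by (rule card_image[symmetric]) (rule inj_on_subset[OF iinj_8], blast)
  also have "\<dots> = pc_edges Ps" using card_Cedges[OF Ps(1)] Ps(2) by simp
  also have "\<dots> \<le> rho V E" using rho_props(1)[OF sg Ps(1)] .
  finally show ?thesis .
qed

end


definition tr :: "'b \<Rightarrow> 'b \<Rightarrow> 'b \<Rightarrow> 'b" where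
  "tr x z y = (if y = x then z else if y = z then x else y)"

lemma tr_tr: "tr x z (tr x z y) = y"
  unfolding tr_def by auto

lemma inj_tr: "inj (tr x z)"
  by (metis injI tr_tr)

context
  fixes V :: "'a set" and E K \<sigma>
  assumes sg: "simple_graph V E" and Kpos: "K > 0"
    and sig: "\<sigma> \<in> permutations_of_set (H_vertices E K)"
begin

abbreviation "LL \<equiv> greedy_mis H_adj \<sigma>"

lemmas isub_9 = I_sub[OF sg Kpos sig]
lemmas iinj_9 = I_inj[OF sg Kpos sig]
lemmas iport_9 = I_port[OF sg Kpos sig]
lemmas dsg_9 = dsig[OF sg Kpos sig]
lemmas ssg_9 = setsig[OF sg Kpos sig]
lemmas port_le1_9 = port_le1[OF sg Kpos sig]

lemma D_accept:
  assumes xD: "x \<in> Dset \<sigma>" and i: "i < K"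
  shows "\<exists>t s. t < s \<and> s < length \<sigma> \<and> \<sigma> ! t = x \<and> \<sigma> ! s = zc (fst x) i \<and>
           (\<forall>y\<in>greedy_mis H_adj (take t \<sigma>). \<not> H_adj (zc (fst x) i) y)"
proof -
  let ?z = "zc (fst x) i"
  obtain b t j where D: "x \<in> LL" "b \<in> fst x" "pt x b = 1" "t < j" "j < length \<sigma>" "\<sigma> ! t = x"
     "\<sigma> ! j \<in> LL" "b \<in> fst (\<sigma> ! j)" "pt (\<sigma> ! j) b = 0"
    using xD unfolding Dset_def by blast
  have t: "t < length \<sigma>" using D by simp
  have xH: "x \<in> H_vertices E K" using D(1) isub_9 by blast
  have zH: "?z \<in> H_vertices E K" using zc_in_H[OF H_mem(1)[OF xH] i] .
  have fz: "fst ?z = fst x" "\<And>w. pt ?z w = 0" unfolding zc_def by auto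
  have zx: "?z \<noteq> x" using fz D(3) by auto
  have GT: "greedy_mis H_adj (take t \<sigma>) = LL \<inter> set (take t \<sigma>)"
    by (rule greedy_take[OF dsg_9])
  have acc: "\<forall>y\<in>greedy_mis H_adj (take t \<sigma>). \<not> H_adj ?z y"
  proof (intro ballI notI)
    fix y assume y: "y \<in> greedy_mis H_adj (take t \<sigma>)" and adj: "H_adj ?z y"
    have yL: "y \<in> LL" using y GT by blast
    obtain k where k: "k < t" "\<sigma> ! k = y" using y GT t by (auto simp: in_set_conv_nth)
    have yx: "y \<noteq> x" using k D(6) dsg_9 t by (auto simp: nth_eq_iff_index_eq)
    from adj have "fst ?z = fst y \<or> (\<exists>w. fst ?z \<inter> fst y = {w} \<and> pt ?z w = pt y w)"
      unfolding H_adj_def by auto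
    then show False
    proof
      assume "fst ?z = fst y"
      then have "fst x = fst y" using fz by simp
      then have "x = y" using iinj_9 D(1) yL by (auto simp: inj_on_def)
      then show False using yx by simp
    next
      assume "\<exists>w. fst ?z \<inter> fst y = {w} \<and> pt ?z w = pt y w"
      then obtain w where w: "w \<in> fst x" "w \<in> fst y" "pt y w = 0" using fz by auto
      have "pt x w \<noteq> pt y w" by (rule iport_9[OF D(1) yL yx[symmetric] w(1,2)])
      moreover have "pt x w \<le> 1" using port_le1_9[OF D(1) w(1)] .
      ultimately have xw: "pt x w = 1" using w(3) by simp
      have wb: "w = b"
      proof (rule ccontr)
        assume "w \<noteq> b"
        then have "pt x w = 0" using H_no11[OF sg xH D(2) w(1)] D(3) by auto
        then show False using xw by simp
      qed
      have yj: "y \<noteq> \<sigma> ! j" using k D(4,5) dsg_9 t by (auto simp: nth_eq_iff_index_eq)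
      have "pt y b \<noteq> pt (\<sigma> ! j) b" by (rule iport_9[OF yL D(7) yj]) (use w wb D(8) in auto)
      then show False using w wb D(9) by simp
    qed
  qed
  have "?z \<in> set \<sigma>" using zH ssg_9 by simp
  then obtain s where s: "s < length \<sigma>" "\<sigma> ! s = ?z" by (auto simp: in_set_conv_nth)
  have "s \<noteq> t" using s D(6) zx by auto
  moreover have "\<not> s < t"
  proof
    assume st: "s < t"
    have "?z \<notin> LL"
    proof
      assume "?z \<in> LL"
      then have "?z = x" using iinj_9 D(1) fz by (auto simp: inj_on_def)
      then show False using zx by simp
    qed
    then have "\<not> (\<forall>y\<in>greedy_mis H_adj (take s \<sigma>). \<not> H_adj (\<sigma> ! s) y)"
      using greedy_nth_iff[OF dsg_9 s(1), of H_adj] s(2) by simp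
    then obtain y where y: "y \<in> greedy_mis H_adj (take s \<sigma>)" "H_adj ?z y" using s(2) by auto
    have "set (take s \<sigma>) \<subseteq> set (take t \<sigma>)" using st by (simp add: set_take_subset_set_take)
    then have "y \<in> greedy_mis H_adj (take t \<sigma>)" using y(1) greedy_take[OF dsg_9, of H_adj s] GT by blast
    then show False using acc y(2) by blast
  qed
  ultimately have "t < s" by simp
  then show ?thesis using s D(6) acc by blast
qed

lemma swap_in:
  assumes xD: "x \<in> Dset \<sigma>" and i: "i < K"
  shows "map (tr x (zc (fst x) i)) \<sigma> \<in> permutations_of_set (H_vertices E K)
       \<and> zc (fst x) i \<in> greedy_mis H_adj (map (tr x (zc (fst x) i)) \<sigma>)"
proof -
  let ?z = "zc (fst x) i"
  let ?f = "tr x ?z"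
  let ?s = "map ?f \<sigma>"
  obtain t s where ts: "t < s" "s < length \<sigma>" "\<sigma> ! t = x" "\<sigma> ! s = ?z"
    "\<forall>y\<in>greedy_mis H_adj (take t \<sigma>). \<not> H_adj ?z y"
    using D_accept[OF xD i] by blast
  have xs1: "x \<in> set \<sigma>" using ts(1,2,3) by (metis nth_mem less_trans)
  have xs2: "?z \<in> set \<sigma>" using ts(2,4) by (metis nth_mem)
  note xs = xs1 xs2
  have ds: "distinct ?s" unfolding distinct_map using dsg_9 inj_on_subset[OF inj_tr[of x ?z]] by blast
  have "set ?s = ?f ` set \<sigma>" by simp
  also have "\<dots> = set \<sigma>"
  proof
    show "?f ` set \<sigma> \<subseteq> set \<sigma>" using xs unfolding tr_def by auto
    show "set \<sigma> \<subseteq> ?f ` set \<sigma>"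
    proof
      fix y assume "y \<in> set \<sigma>"
      moreover have "?f (?f y) = y" by (rule tr_tr)
      moreover have "?f y \<in> set \<sigma>" using xs \<open>y \<in> set \<sigma>\<close> unfolding tr_def by auto
      ultimately show "y \<in> ?f ` set \<sigma>" by (metis imageI)
    qed
  qed
  finally have ss: "set ?s = H_vertices E K" using ssg_9 by simp
  have tk: "take t ?s = take t \<sigma>"
  proof (rule nth_equalityI)
    show "length (take t ?s) = length (take t \<sigma>)" by simp
    fix k assume "k < length (take t ?s)"
    then have k: "k < t" "k < length \<sigma>" by auto
    have "\<sigma> ! k \<noteq> x" using k ts dsg_9 by (auto simp: nth_eq_iff_index_eq)
    moreover have "\<sigma> ! k \<noteq> ?z"
    proof
      assume "\<sigma> ! k = ?z"
      then have "\<sigma> ! k = \<sigma> ! s" using ts(4) by simp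
      then have "k = s" using nth_eq_iff_index_eq[OF dsg_9 k(2) ts(2)] by simp
      then show False using k ts by simp
    qed
    ultimately show "take t ?s ! k = take t \<sigma> ! k" using k unfolding tr_def by simp
  qed
  have st: "?s ! t = ?z" using ts unfolding tr_def by simp
  have "?s ! t \<in> greedy_mis H_adj ?s"
    using greedy_nth_iff[OF ds, of t H_adj] ts tk st by simp
  then show ?thesis using ss ds st by (auto simp: permutations_of_set_def)
qed

end

lemma count_swap:
  assumes sg: "simple_graph V E" and Kpos: "K > 0" and i: "i < K"
  shows "card {\<sigma>\<in>permutations_of_set (H_vertices E K). x \<in> Dset \<sigma>}
       \<le> card {\<sigma>\<in>permutations_of_set (H_vertices E K). zc (fst x) i \<in> greedy_mis H_adj \<sigma>}"
proof (rule card_inj_on_le)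
  let ?f = "map (tr x (zc (fst x) i))"
  show "inj_on ?f {\<sigma>\<in>permutations_of_set (H_vertices E K). x \<in> Dset \<sigma>}"
    by (rule inj_on_subset[OF inj_mapI[OF inj_tr]]) simp
  show "?f ` {\<sigma>\<in>permutations_of_set (H_vertices E K). x \<in> Dset \<sigma>}
     \<subseteq> {\<sigma>\<in>permutations_of_set (H_vertices E K). zc (fst x) i \<in> greedy_mis H_adj \<sigma>}"
    using swap_in[OF sg Kpos _ _ i] by blast
  show "finite {\<sigma>\<in>permutations_of_set (H_vertices E K). zc (fst x) i \<in> greedy_mis H_adj \<sigma>}"
    by simp
qed


definition Mx :: "'a set set \<Rightarrow> nat \<Rightarrow> 'a hvert set" where
  "Mx E K = {x \<in> H_vertices E K. \<exists>b\<in>fst x. pt x b = 1}"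

lemma mixed_eq:
  assumes sg: "simple_graph V E" and x: "x \<in> H_vertices E K" and b: "b \<in> fst x" "pt x b = 1"
  shows "x = mx (fst x) b"
proof -
  obtain e f i where xe: "x = (e, f, i)" by (cases x) auto
  have h: "e \<in> E" "\<forall>z. z \<notin> e \<longrightarrow> f z = 0"
     "((\<exists>u\<in>e. \<exists>v\<in>e. u \<noteq> v \<and> f u = 0 \<and> f v = 1) \<and> i = 0) \<or> ((\<forall>z\<in>e. f z = 0) \<and> i < K)"
    using x unfolding xe H_vertices_def by auto
  have fb: "f b = 1" "b \<in> e" using b xe by auto
  have i0: "i = 0" using h(3) fb by auto
  have "f = (\<lambda>z. if z = b then 1 else 0)"
  proof
    fix z show "f z = (if z = b then 1 else 0)"
    proof (cases "z = b")
      case True then show ?thesis using fb by simp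
    next
      case False
      show ?thesis
      proof (cases "z \<in> e")
        case True
        have "pt x z = 0" by (rule H_no11[OF sg x, of b z]) (use b xe True False in auto)
        then show ?thesis using xe False by simp
      next
        case nz: False then show ?thesis using h(2) False by simp
      qed
    qed
  qed
  then show ?thesis unfolding xe mx_def using i0 by simp
qed

lemma mixed_le2:
  assumes sg: "simple_graph V E" and e: "e \<in> E"
  shows "card {x \<in> Mx E K. fst x = e} \<le> 2"
proof -
  have "{x \<in> Mx E K. fst x = e} \<subseteq> mx e ` e"
  proof
    fix x assume "x \<in> {x \<in> Mx E K. fst x = e}"
    then obtain b where x: "x \<in> H_vertices E K" "b \<in> fst x" "pt x b = 1" "fst x = e"
      unfolding Mx_def by blast
    then have "x = mx e b" using mixed_eq[OF sg x(1) x(2) x(3)] by simp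
    then show "x \<in> mx e ` e" using x by blast
  qed
  moreover have fe: "finite e" "card e = 2" using sg e unfolding simple_graph_def by (auto intro: card_ge_0_finite)
  ultimately have "card {x \<in> Mx E K. fst x = e} \<le> card (mx e ` e)" by (intro card_mono) auto
  also have "\<dots> \<le> card e" by (rule card_image_le[OF fe(1)])
  finally show ?thesis using fe by simp
qed

lemma inj_zc: "inj (zc e)"
  unfolding zc_def by (auto intro: injI)

context
  fixes V :: "'a set" and E K \<sigma>
  assumes sg: "simple_graph V E" and Kpos: "K > 0"
    and sig: "\<sigma> \<in> permutations_of_set (H_vertices E K)"
begin

abbreviation "GG \<equiv> greedy_mis H_adj \<sigma>"

lemma D_sub: "Dset \<sigma> \<subseteq> GG"
  unfolding Dset_def by auto

lemma D_Mx: "Dset \<sigma> \<subseteq> Mx E K"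
  using D_sub I_sub[OF sg Kpos sig] unfolding Dset_def Mx_def by blast

lemma card_le_rho_D: "card GG \<le> rho V E + card (Dset \<sigma>)"
proof -
  have f: "finite GG" using I_fin[OF sg Kpos sig] .
  have "card GG = card (GG - Dset \<sigma>) + card (Dset \<sigma>)"
    using card_Diff_subset[OF finite_subset[OF D_sub f] D_sub] card_mono[OF f D_sub] by simp
  then show ?thesis using card_ID_le_rho[OF sg Kpos sig] by simp
qed

lemma rho_le_2: "rho V E \<le> 2 * card GG"
proof -
  obtain Ps where "path_cover V E Ps" "pc_edges Ps = rho V E" using rho_props(2)[OF sg] by blast
  then show ?thesis using lower_det[OF sg Kpos sig] by metis
qed

lemma zero_count:
  "(\<Sum>x\<in>Mx E K. card {i\<in>{..<K}. zc (fst x) i \<in> GG}) \<le> 2 * rho V E"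
proof -
  define Z where "Z = {z \<in> GG. pt z = (\<lambda>_. 0)}"
  have fG: "finite GG" using I_fin[OF sg Kpos sig] .
  have fZ: "finite Z" unfolding Z_def using fG by simp
  have fM: "finite (Mx E K)" unfolding Mx_def using H_fin[OF sg] by simp
  have "(\<Sum>x\<in>Mx E K. card {i\<in>{..<K}. zc (fst x) i \<in> GG}) \<le> (\<Sum>x\<in>Mx E K. card {z\<in>Z. fst z = fst x})"
  proof (rule sum_mono)
    fix x assume "x \<in> Mx E K"
    show "card {i\<in>{..<K}. zc (fst x) i \<in> GG} \<le> card {z\<in>Z. fst z = fst x}"
    proof (rule card_inj_on_le[of "zc (fst x)"])
      show "inj_on (zc (fst x)) {i\<in>{..<K}. zc (fst x) i \<in> GG}" using inj_zc by (rule inj_on_subset) simp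
      show "zc (fst x) ` {i\<in>{..<K}. zc (fst x) i \<in> GG} \<subseteq> {z\<in>Z. fst z = fst x}"
        unfolding Z_def zc_def by auto
      show "finite {z\<in>Z. fst z = fst x}" using fZ by simp
    qed
  qed
  also have "\<dots> = (\<Sum>z\<in>Z. card {x\<in>Mx E K. fst z = fst x})"
    by (rule double_count[OF fM fZ])
  also have "\<dots> \<le> (\<Sum>z\<in>Z. 2)"
  proof (rule sum_mono)
    fix z assume z: "z \<in> Z"
    then have "z \<in> H_vertices E K" unfolding Z_def using I_sub[OF sg Kpos sig] by blast
    then have "fst z \<in> E" by (rule H_mem(1))
    then have "card {x \<in> Mx E K. fst x = fst z} \<le> 2" by (rule mixed_le2[OF sg])
    moreover have "{x\<in>Mx E K. fst z = fst x} = {x \<in> Mx E K. fst x = fst z}" by auto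
    ultimately show "card {x\<in>Mx E K. fst z = fst x} \<le> 2" by simp
  qed
  also have "\<dots> = 2 * card Z" by simp
  also have "card Z \<le> card (GG - Dset \<sigma>)"
  proof (rule card_mono)
    show "finite (GG - Dset \<sigma>)" using fG by simp
    show "Z \<subseteq> GG - Dset \<sigma>" unfolding Z_def Dset_def by auto
  qed
  also have "\<dots> \<le> rho V E" by (rule card_ID_le_rho[OF sg Kpos sig])
  finally show ?thesis by simp
qed

end

lemma sum_D_bound:
  assumes sg: "simple_graph V E" and Kpos: "K > 0"
  shows "K * (\<Sum>\<sigma>\<in>permutations_of_set (H_vertices E K). card (Dset \<sigma>))
      \<le> 2 * rho V E * card (permutations_of_set (H_vertices E K))"
proof -
  let ?P = "permutations_of_set (H_vertices E K)"
  let ?M = "Mx E K"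
  have fP: "finite ?P" by simp
  have fM: "finite ?M" unfolding Mx_def using H_fin[OF sg] by simp
  have "(\<Sum>\<sigma>\<in>?P. card (Dset \<sigma>)) = (\<Sum>\<sigma>\<in>?P. card {x\<in>?M. x \<in> Dset \<sigma>})"
  proof (rule sum.cong)
    fix \<sigma> assume "\<sigma> \<in> ?P"
    then have "Dset \<sigma> \<subseteq> ?M" using D_Mx[OF sg Kpos] by blast
    then have "{x\<in>?M. x \<in> Dset \<sigma>} = Dset \<sigma>" by blast
    then show "card (Dset \<sigma>) = card {x\<in>?M. x \<in> Dset \<sigma>}" by simp
  qed simp
  also have "\<dots> = (\<Sum>x\<in>?M. card {\<sigma>\<in>?P. x \<in> Dset \<sigma>})"
    by (rule double_count[OF fP fM])
  finally have e1: "(\<Sum>\<sigma>\<in>?P. card (Dset \<sigma>)) = (\<Sum>x\<in>?M. card {\<sigma>\<in>?P. x \<in> Dset \<sigma>})" .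
  have e2: "K * card {\<sigma>\<in>?P. x \<in> Dset \<sigma>} \<le> (\<Sum>\<sigma>\<in>?P. card {i\<in>{..<K}. zc (fst x) i \<in> greedy_mis H_adj \<sigma>})"
    for x
  proof -
    have "K * card {\<sigma>\<in>?P. x \<in> Dset \<sigma>} = (\<Sum>i\<in>{..<K}. card {\<sigma>\<in>?P. x \<in> Dset \<sigma>})" by simp
    also have "\<dots> \<le> (\<Sum>i\<in>{..<K}. card {\<sigma>\<in>?P. zc (fst x) i \<in> greedy_mis H_adj \<sigma>})"
      by (rule sum_mono) (use count_swap[OF sg Kpos] in auto)
    also have "\<dots> = (\<Sum>\<sigma>\<in>?P. card {i\<in>{..<K}. zc (fst x) i \<in> greedy_mis H_adj \<sigma>})"
      by (rule double_count) (use fP in auto)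
    finally show ?thesis .
  qed
  have "K * (\<Sum>\<sigma>\<in>?P. card (Dset \<sigma>)) = (\<Sum>x\<in>?M. K * card {\<sigma>\<in>?P. x \<in> Dset \<sigma>})"
    unfolding e1 by (simp add: sum_distrib_left)
  also have "\<dots> \<le> (\<Sum>x\<in>?M. \<Sum>\<sigma>\<in>?P. card {i\<in>{..<K}. zc (fst x) i \<in> greedy_mis H_adj \<sigma>})"
    by (rule sum_mono) (rule e2)
  also have "\<dots> = (\<Sum>\<sigma>\<in>?P. \<Sum>x\<in>?M. card {i\<in>{..<K}. zc (fst x) i \<in> greedy_mis H_adj \<sigma>})"
    by (rule sum.swap)
  also have "\<dots> \<le> (\<Sum>\<sigma>\<in>?P. 2 * rho V E)"
    by (rule sum_mono) (rule zero_count[OF sg Kpos], simp)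
  also have "\<dots> = 2 * rho V E * card ?P" by simp
  finally show ?thesis .
qed


theorem lemma4p5:
  fixes V :: "'a set" and E :: "'a set set" and K :: nat
  assumes "simple_graph V E" and "K > 0"
  shows "real (rho V E) / 2 \<le> alg2_expected E K \<and>
         alg2_expected E K \<le> (1 + 2 / real K) * real (rho V E)"
proof -
  note sg = assms(1) and Kpos = assms(2)
  let ?P = "permutations_of_set (H_vertices E K)"
  have fP: "finite ?P" by simp
  have neP: "?P \<noteq> {}" using H_fin[OF sg] by simp
  have N0: "card ?P > 0" using fP neP by (simp add: card_gt_0_iff)
  define N where "N = real (card ?P)"
  have Npos: "N > 0" unfolding N_def using N0 by simp
  define r where "r = real (rho V E)"
  have cardout: "card (alg2_output \<sigma>) = card (greedy_mis H_adj \<sigma>)" if "\<sigma> \<in> ?P" for \<sigma>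
    unfolding alg2_output_def by (rule card_image[OF I_inj[OF sg Kpos that]])
  define S where "S = (\<Sum>\<sigma>\<in>?P. real (card (greedy_mis H_adj \<sigma>)))"
  have ex: "alg2_expected E K = S / N"
  proof -
    have "alg2_expected E K = (\<Sum>\<sigma>\<in>?P. real (card (alg2_output \<sigma>))) / real (card ?P)"
      unfolding alg2_expected_def by (rule integral_pmf_of_set[OF neP fP])
    also have "(\<Sum>\<sigma>\<in>?P. real (card (alg2_output \<sigma>))) = S"
      unfolding S_def by (rule sum.cong) (simp_all add: cardout)
    finally show ?thesis unfolding N_def .
  qed
  have low: "N * (r / 2) \<le> S"
  proof -
    have "N * (r / 2) = (\<Sum>\<sigma>\<in>?P. r / 2)" unfolding N_def by simp
    also have "\<dots> \<le> S" unfolding S_def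
    proof (rule sum_mono)
      fix \<sigma> assume "\<sigma> \<in> ?P"
      then have "rho V E \<le> 2 * card (greedy_mis H_adj \<sigma>)" by (rule rho_le_2[OF sg Kpos])
      then show "r / 2 \<le> real (card (greedy_mis H_adj \<sigma>))" unfolding r_def by linarith
    qed
    finally show ?thesis .
  qed
  define DS where "DS = (\<Sum>\<sigma>\<in>?P. card (Dset \<sigma>))"
  have dsb: "real K * real DS \<le> 2 * r * N"
  proof -
    have "K * DS \<le> 2 * rho V E * card ?P" unfolding DS_def by (rule sum_D_bound[OF sg Kpos])
    then have "real (K * DS) \<le> real (2 * rho V E * card ?P)" by (rule of_nat_mono)
    then show ?thesis unfolding r_def N_def by simp
  qed
  have up1: "S \<le> N * r + real DS"
  proof -
    have "S \<le> (\<Sum>\<sigma>\<in>?P. r + real (card (Dset \<sigma>)))" unfolding S_def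
    proof (rule sum_mono)
      fix \<sigma> assume "\<sigma> \<in> ?P"
      then have "card (greedy_mis H_adj \<sigma>) \<le> rho V E + card (Dset \<sigma>)" by (rule card_le_rho_D[OF sg Kpos])
      then show "real (card (greedy_mis H_adj \<sigma>)) \<le> r + real (card (Dset \<sigma>))" unfolding r_def by linarith
    qed
    also have "\<dots> = N * r + real DS" unfolding N_def DS_def by (simp add: sum.distrib)
    finally show ?thesis .
  qed
  have Kp: "real K > 0" using Kpos by simp
  have dsb2: "real DS \<le> 2 * r * N / real K" using dsb Kp by (simp add: field_simps)
  have "S / N \<le> (N * r + 2 * r * N / real K) / N"
    using up1 dsb2 Npos by (intro divide_right_mono) auto
  also have "\<dots> = (1 + 2 / real K) * r" using Npos Kp by (simp add: field_simps)
  finally have U: "S / N \<le> (1 + 2 / real K) * r" .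
  have L: "r / 2 \<le> S / N" using low Npos by (simp add: field_simps)
  show ?thesis using U L ex unfolding r_def by simp
qed


end
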